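(* Let $d,e,n$ be positive integers with $n>1$, $\gcd(e,n)=1$, and $d\cdot e\equiv 1 \pmod{\lambda(n)}$. Then $\omega_e(\omega_e(n))>0$, and $$d\equiv e^{\,\omega_e(\omega_e(n))-1} \pmod{\omega_e(n)}.$$
   Context: For integers $m$ and $N\ge 1$, define $\omega_m(N)=\min\{k\in\mathbb{N}: k>0,\ m^k\equiv 1\pmod N\}$ (the multiplicative order of $m$ modulo $N$) if $\gcd(m,N)=1$, and $\omega_m(N)=0$ if $\gcd(m,N)\ne 1$. The Carmichael function $\lambda$ is defined as follows: if $n=\prod_{i=1}^r p_i^{\alpha_i}$ is the prime factorization of $n$, then $\lambda(n)=\mathrm{lcm}\,(\lambda(p_1^{\alpha_1}),\dots,\lambda(p_r^{\alpha_r}))$, where $\lambda(p^{\alpha})=2^{\alpha-2}$ if $p=2$ and $\alpha\ge 3$, and $\lambda(p^\alpha)=p^{\alpha-1}(p-1)$ otherwise. *)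

theory Defs
  imports "HOL-Number_Theory.Number_Theory"
begin

end

theory Submission
  imports Defs
begin

theorem mainTheorem2:
  fixes d e n :: nat
  assumes "d > 0" and "e > 0" and "n > 1"
    and "coprime e n"
    and "[d * e = 1] (mod Carmichael n)"
  shows "ord (ord n e) e > 0 \<and> [d = e ^ (ord (ord n e) e - 1)] (mod ord n e)"
proof -
  define m where "m = ord n e"
  have "m dvd Carmichael n"
    unfolding m_def using assms by (intro ord_dvd_Carmichael) (auto simp: coprime_commute)
  hence c: "[d * e = 1] (mod m)" using assms(5) cong_dvd_modulus_nat by blast
  have "coprime (d * e) m"
    using c cong_imp_coprime[of 1 "d*e" m] by (simp add: cong_sym)
  hence cm: "coprime m e" by (simp add: coprime_commute)
  define k where "k = ord m e"
  have kpos: "k > 0" unfolding k_def using cm by simp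
  have ek: "[e ^ k = 1] (mod m)" unfolding k_def by (rule ord)
  have "e ^ k = e * e ^ (k - 1)" using kpos by (cases k) auto
  hence "[e * e ^ (k - 1) = 1] (mod m)" using ek by simp
  hence "[d * (e * e ^ (k - 1)) = d * 1] (mod m)" by (intro cong_mult) auto
  moreover have "d * (e * e ^ (k - 1)) = (d * e) * e ^ (k - 1)" by simp
  moreover have "[(d * e) * e ^ (k - 1) = 1 * e ^ (k - 1)] (mod m)" using c by (intro cong_mult) auto
  ultimately have "[d = e ^ (k - 1)] (mod m)"
    by (metis cong_sym cong_trans mult_1 mult_1_right)
  thus ?thesis using kpos unfolding k_def m_def by simp
qed

end
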